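(* Let $R$ be a commutative Noetherian ring of prime characteristic $p$, let $G$ be an $x$-torsion-free left $R[x,f]$-module, and let $N$ be a special annihilator submodule of $G$. Then $G/N$ is $x$-torsion-free.
   Context: $R[x,f]$ is the Frobenius skew polynomial ring: free left $R$-module on $(x^i)_{i\ge0}$, $xr=r^px$. A left $R[x,f]$-module $M$ is $x$-torsion-free if $xm=0$ implies $m=0$. A special annihilator submodule of $G$ is one of the form $\{g:\theta g=0\ \forall\theta\in\mathfrak{B}\}$ for some graded two-sided ideal $\mathfrak{B}=\bigoplus_n\mathfrak{b}_nx^n$ of $R[x,f]$ ($(\mathfrak{b}_n)$ an ascending chain of ideals of $R$). *)

theory Defs
  imports "HOL-Algebra.Ring_Divisibility" "HOL-Algebra.Module" "HOL-Algebra.AbelCoset"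
    "HOL-Computational_Algebra.Primes"
begin

definition prime_char :: "('a, 'm) ring_scheme \<Rightarrow> nat \<Rightarrow> bool" where
  "prime_char R p \<longleftrightarrow> prime p \<and> (\<forall>n::nat. add_pow R n \<one>\<^bsub>R\<^esub> = \<zero>\<^bsub>R\<^esub> \<longleftrightarrow> p dvd n)"

text \<open>A left module over the Frobenius skew polynomial ring R[x,f] is the same as an R-module G
  together with an additive map x on G satisfying x (r g) = r^p (x g) (the relation x r = r^p x).\<close>
definition frobenius_skew_module ::
    "('a, 'c) ring_scheme \<Rightarrow> ('a, 'b) module \<Rightarrow> nat \<Rightarrow> ('b \<Rightarrow> 'b) \<Rightarrow> bool" where
  "frobenius_skew_module R G p x \<longleftrightarrow>
     module R G \<and>
     (\<forall>g\<in>carrier G. x g \<in> carrier G) \<and>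
     (\<forall>g\<in>carrier G. \<forall>h\<in>carrier G. x (g \<oplus>\<^bsub>G\<^esub> h) = x g \<oplus>\<^bsub>G\<^esub> x h) \<and>
     (\<forall>r\<in>carrier R. \<forall>g\<in>carrier G. x (r \<odot>\<^bsub>G\<^esub> g) = (r [^]\<^bsub>R\<^esub> p) \<odot>\<^bsub>G\<^esub> x g)"

definition x_torsion_free :: "('a, 'b) module \<Rightarrow> ('b \<Rightarrow> 'b) \<Rightarrow> bool" where
  "x_torsion_free G x \<longleftrightarrow> (\<forall>g\<in>carrier G. x g = \<zero>\<^bsub>G\<^esub> \<longrightarrow> g = \<zero>\<^bsub>G\<^esub>)"

text \<open>A graded two-sided ideal \<Oplus>_n b_n x^n of R[x,f], given by an ascending chain of ideals of R.\<close>
definition graded_two_sided_ideal :: "('a, 'c) ring_scheme \<Rightarrow> (nat \<Rightarrow> 'a set) \<Rightarrow> bool" where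
  "graded_two_sided_ideal R b \<longleftrightarrow> (\<forall>n. ideal (b n) R) \<and> (\<forall>n. b n \<subseteq> b (Suc n))"

text \<open>The annihilator in G of the graded ideal \<Oplus>_n b_n x^n: all g with (r x^n) g = 0 for r \<in> b_n.\<close>
definition special_ann ::
    "('a, 'b) module \<Rightarrow> ('b \<Rightarrow> 'b) \<Rightarrow> (nat \<Rightarrow> 'a set) \<Rightarrow> 'b set" where
  "special_ann G x b = {g \<in> carrier G. \<forall>n. \<forall>r\<in>b n. r \<odot>\<^bsub>G\<^esub> (x ^^ n) g = \<zero>\<^bsub>G\<^esub>}"

definition is_special_annihilator_submodule ::
    "('a, 'c) ring_scheme \<Rightarrow> ('a, 'b) module \<Rightarrow> ('b \<Rightarrow> 'b) \<Rightarrow> 'b set \<Rightarrow> bool" where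
  "is_special_annihilator_submodule R G x N \<longleftrightarrow>
     (\<exists>b. graded_two_sided_ideal R b \<and> N = special_ann G x b)"

text \<open>G/N is x-torsion-free, where x acts on G/N by x (N + g) = N + x g and the zero of G/N is N.\<close>
definition quotient_x_torsion_free :: "('a, 'b) module \<Rightarrow> ('b \<Rightarrow> 'b) \<Rightarrow> 'b set \<Rightarrow> bool" where
  "quotient_x_torsion_free G x N \<longleftrightarrow>
     (\<forall>g\<in>carrier G. N +>\<^bsub>G\<^esub> (x g) = N \<longrightarrow> N +>\<^bsub>G\<^esub> g = N)"

end

theory Submission
  imports Defs
begin

lemma ideal_pow_in:
  assumes "ideal I R" "r \<in> I" "0 < n"
  shows "r [^]\<^bsub>R\<^esub> (n::nat) \<in> I"
proof -
  interpret ideal I R by fact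
  obtain k where n: "n = Suc k" using assms(3) by (cases n) auto
  have rc: "r \<in> carrier R" using assms(2) a_subset by blast
  have "r [^]\<^bsub>R\<^esub> Suc k = r [^]\<^bsub>R\<^esub> k \<otimes>\<^bsub>R\<^esub> r" by simp
  moreover have "r [^]\<^bsub>R\<^esub> k \<otimes>\<^bsub>R\<^esub> r \<in> I"
    using I_l_closed[OF assms(2)] rc by simp
  ultimately show ?thesis using n by simp
qed

theorem lemma3p1:
  fixes R :: "('a, 'c) ring_scheme" and G :: "('a, 'b) module"
    and p :: nat and x :: "'b \<Rightarrow> 'b" and N :: "'b set"
  assumes "cring R" and "noetherian_ring R" and "prime_char R p"
    and "frobenius_skew_module R G p x"
    and "x_torsion_free G x"
    and "is_special_annihilator_submodule R G x N"
  shows "quotient_x_torsion_free G x N"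
proof -
  have M: "module R G" and xc: "\<And>g. g \<in> carrier G \<Longrightarrow> x g \<in> carrier G"
    and xadd: "\<And>g h. g \<in> carrier G \<Longrightarrow> h \<in> carrier G \<Longrightarrow> x (g \<oplus>\<^bsub>G\<^esub> h) = x g \<oplus>\<^bsub>G\<^esub> x h"
    and xsm: "\<And>r g. r \<in> carrier R \<Longrightarrow> g \<in> carrier G \<Longrightarrow> x (r \<odot>\<^bsub>G\<^esub> g) = (r [^]\<^bsub>R\<^esub> p) \<odot>\<^bsub>G\<^esub> x g"
    using assms(4) unfolding frobenius_skew_module_def by auto
  interpret module R G by (rule M)
  have p0: "0 < p" using assms(3) unfolding prime_char_def using prime_gt_0_nat by blast
  have tf: "\<And>g. g \<in> carrier G \<Longrightarrow> x g = \<zero>\<^bsub>G\<^esub> \<Longrightarrow> g = \<zero>\<^bsub>G\<^esub>"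
    using assms(5) unfolding x_torsion_free_def by auto
  obtain b where gb: "graded_two_sided_ideal R b" and Ndef: "N = special_ann G x b"
    using assms(6) unfolding is_special_annihilator_submodule_def by auto
  have bid: "\<And>n. ideal (b n) R" and bmono: "\<And>n. b n \<subseteq> b (Suc n)"
    using gb unfolding graded_two_sided_ideal_def by auto
  have bc: "\<And>n r. r \<in> b n \<Longrightarrow> r \<in> carrier R"
    using bid ideal.axioms(1) additive_subgroup.a_subset by blast
  have xnc: "\<And>n g. g \<in> carrier G \<Longrightarrow> (x ^^ n) g \<in> carrier G"
  proof -
    fix n g assume "g \<in> carrier G" then show "(x ^^ n) g \<in> carrier G"
      by (induction n) (auto intro: xc)
  qed
  have x0: "x \<zero>\<^bsub>G\<^esub> = \<zero>\<^bsub>G\<^esub>"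
  proof -
    have "x \<zero>\<^bsub>G\<^esub> = x \<zero>\<^bsub>G\<^esub> \<oplus>\<^bsub>G\<^esub> x \<zero>\<^bsub>G\<^esub>" using xadd[of "\<zero>\<^bsub>G\<^esub>" "\<zero>\<^bsub>G\<^esub>"] by simp
    then show ?thesis using xc[of "\<zero>\<^bsub>G\<^esub>"] M.add.r_cancel_one' by (metis M.zero_closed M.r_zero)
  qed
  have xneg: "\<And>g. g \<in> carrier G \<Longrightarrow> x (\<ominus>\<^bsub>G\<^esub> g) = \<ominus>\<^bsub>G\<^esub> x g"
  proof -
    fix g assume g: "g \<in> carrier G"
    have "x (\<ominus>\<^bsub>G\<^esub> g) \<oplus>\<^bsub>G\<^esub> x g = \<zero>\<^bsub>G\<^esub>" using xadd[of "\<ominus>\<^bsub>G\<^esub> g" g] g x0 by (simp add: M.l_neg)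
    then show "x (\<ominus>\<^bsub>G\<^esub> g) = \<ominus>\<^bsub>G\<^esub> x g"
      by (metis M.add.inv_closed M.minus_equality g xc)
  qed
  have xn0: "\<And>n. (x ^^ n) \<zero>\<^bsub>G\<^esub> = \<zero>\<^bsub>G\<^esub>"
  proof -
    fix n show "(x ^^ n) \<zero>\<^bsub>G\<^esub> = \<zero>\<^bsub>G\<^esub>" by (induction n) (auto simp: x0)
  qed
  have xnadd: "\<And>n g h. g \<in> carrier G \<Longrightarrow> h \<in> carrier G \<Longrightarrow> (x ^^ n) (g \<oplus>\<^bsub>G\<^esub> h) = (x ^^ n) g \<oplus>\<^bsub>G\<^esub> (x ^^ n) h"
  proof -
    fix n g h assume "g \<in> carrier G" "h \<in> carrier G"
    then show "(x ^^ n) (g \<oplus>\<^bsub>G\<^esub> h) = (x ^^ n) g \<oplus>\<^bsub>G\<^esub> (x ^^ n) h"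
      by (induction n) (auto simp: xadd xnc)
  qed
  have xnneg: "\<And>n g. g \<in> carrier G \<Longrightarrow> (x ^^ n) (\<ominus>\<^bsub>G\<^esub> g) = \<ominus>\<^bsub>G\<^esub> (x ^^ n) g"
  proof -
    fix n g assume "g \<in> carrier G"
    then show "(x ^^ n) (\<ominus>\<^bsub>G\<^esub> g) = \<ominus>\<^bsub>G\<^esub> (x ^^ n) g"
      by (induction n) (auto simp: xneg xnc)
  qed
  have sub: "subgroup N (add_monoid G)"
  proof (rule M.add.subgroupI)
    show "N \<subseteq> carrier G" unfolding Ndef special_ann_def by auto
    show "N \<noteq> {}" unfolding Ndef special_ann_def using xn0 bc by auto
    show "\<ominus>\<^bsub>G\<^esub> a \<in> N" if "a \<in> N" for a
      using that unfolding Ndef special_ann_def using xnneg bc xnc smult_r_minus by auto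
    show "a \<oplus>\<^bsub>G\<^esub> c \<in> N" if "a \<in> N" "c \<in> N" for a c
      using that unfolding Ndef special_ann_def using xnadd bc xnc smult_r_distr by auto
  qed
  have ab: "abelian_subgroup N G"
    by (rule abelian_subgroupI3[OF additive_subgroupI[OF sub]]) (rule M.abelian_group_axioms)
  show ?thesis
    unfolding quotient_x_torsion_free_def
  proof (intro ballI impI)
    fix g assume g: "g \<in> carrier G" and eq: "N +>\<^bsub>G\<^esub> x g = N"
    have z: "\<zero>\<^bsub>G\<^esub> \<in> N" unfolding Ndef special_ann_def using xn0 bc by auto
    have Nc: "N \<subseteq> carrier G" unfolding Ndef special_ann_def by auto
    have "\<zero>\<^bsub>G\<^esub> \<oplus>\<^bsub>G\<^esub> x g \<in> N +>\<^bsub>G\<^esub> x g"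
      by (rule M.a_rcosI[OF z Nc xc[OF g]])
    then have xgN: "x g \<in> N" using eq xc[OF g] by simp
    have "g \<in> N"
      unfolding Ndef special_ann_def
    proof (intro CollectI conjI allI ballI g)
      fix n r assume r: "r \<in> b n"
      have rp: "r [^]\<^bsub>R\<^esub> p \<in> b n" using ideal_pow_in[OF bid r p0] by blast
      have "(r [^]\<^bsub>R\<^esub> p) \<odot>\<^bsub>G\<^esub> (x ^^ n) (x g) = \<zero>\<^bsub>G\<^esub>"
        using xgN rp unfolding Ndef special_ann_def by blast
      moreover have "(x ^^ n) (x g) = x ((x ^^ n) g)" by (simp add: funpow_swap1)
      ultimately have "x (r \<odot>\<^bsub>G\<^esub> (x ^^ n) g) = \<zero>\<^bsub>G\<^esub>"
        using xsm[OF bc[OF r] xnc[OF g]] by simp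
      then show "r \<odot>\<^bsub>G\<^esub> (x ^^ n) g = \<zero>\<^bsub>G\<^esub>"
        using tf bc[OF r] xnc[OF g] by simp
    qed
    then show "N +>\<^bsub>G\<^esub> g = N" using abelian_subgroup.a_rcos_const[OF ab] by blast
  qed
qed

end
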